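(* Let $n\geq 2$ and let $c_0:V(K_n)\to\mathbb{Z}$ be any initial chip configuration on the complete graph $K_n$. Then the sequence of configurations $(c_t)_{t\ge0}$ produced by the diffusion process is eventually periodic, i.e. there exist $t\geq 0$ and $p\geq 1$ with $c_{t+p}=c_t$.
   Context: Diffusion process: for a finite simple graph $G$ and a chip configuration $c_t:V(G)\to\mathbb{Z}$ (negative values allowed), the next configuration is defined simultaneously for every vertex $u$ by $c_{t+1}(u)=c_t(u)-|\{w\in N(u): c_t(u)>c_t(w)\}|+|\{w\in N(u): c_t(u)<c_t(w)\}|$. *)

theory Defs
  imports Main
begin

definition simple_graph :: "'a set \<Rightarrow> ('a \<Rightarrow> 'a \<Rightarrow> bool) \<Rightarrow> bool" where
  "simple_graph V E \<longleftrightarrow> finite V \<and> (\<forall>u w. E u w \<longrightarrow> E w u) \<and> (\<forall>u. \<not> E u u)"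

definition nbhd :: "'a set \<Rightarrow> ('a \<Rightarrow> 'a \<Rightarrow> bool) \<Rightarrow> 'a \<Rightarrow> 'a set" where
  "nbhd V E u = {w \<in> V. E u w}"

definition diffusion_step :: "'a set \<Rightarrow> ('a \<Rightarrow> 'a \<Rightarrow> bool) \<Rightarrow> ('a \<Rightarrow> int) \<Rightarrow> ('a \<Rightarrow> int)" where
  "diffusion_step V E c = (\<lambda>u. if u \<in> V then
      c u - int (card {w \<in> nbhd V E u. c u > c w}) + int (card {w \<in> nbhd V E u. c u < c w})
    else c u)"

definition diffusion :: "'a set \<Rightarrow> ('a \<Rightarrow> 'a \<Rightarrow> bool) \<Rightarrow> ('a \<Rightarrow> int) \<Rightarrow> nat \<Rightarrow> ('a \<Rightarrow> int)" where
  "diffusion V E c0 t = (diffusion_step V E ^^ t) c0"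

definition Kn_vertices :: "nat \<Rightarrow> nat set" where
  "Kn_vertices n = {0..<n}"

definition Kn_edge :: "nat \<Rightarrow> nat \<Rightarrow> bool" where
  "Kn_edge u w \<longleftrightarrow> u \<noteq> w"

end

theory Submission
  imports Defs "HOL-Library.FuncSet"
begin

lemma step_Kn:
  assumes "u \<in> {0..<n}"
  shows "diffusion_step {0..<n} Kn_edge c u =
     c u - int (card {w \<in> {0..<n}. c w < c u}) + int (card {w \<in> {0..<n}. c u < c w})"
proof -
  have "{w \<in> nbhd {0..<n} Kn_edge u. c u > c w} = {w \<in> {0..<n}. c w < c u}"
    by (auto simp: nbhd_def Kn_edge_def)
  moreover have "{w \<in> nbhd {0..<n} Kn_edge u. c u < c w} = {w \<in> {0..<n}. c u < c w}"
    by (auto simp: nbhd_def Kn_edge_def)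
  ultimately show ?thesis using assms by (simp add: diffusion_step_def)
qed

lemma card_as_sum: "finite A \<Longrightarrow> int (card {w \<in> A. P w}) = (\<Sum>w\<in>A. if P w then 1 else 0)"
proof -
  assume f: "finite A"
  have "int (card {w \<in> A. P w}) = (\<Sum>w\<in>{w \<in> A. P w}. (1::int))" by simp
  also have "\<dots> = (\<Sum>w\<in>A. if P w then 1 else 0)" using f by (rule sum.inter_filter)
  finally show ?thesis .
qed

lemma step_sum:
  "(\<Sum>u\<in>{0..<n}. diffusion_step {0..<n} Kn_edge c u) = (\<Sum>u\<in>{0..<n}. c u)"
proof -
  let ?V = "{0..<n::nat}"
  have "(\<Sum>u\<in>?V. diffusion_step ?V Kn_edge c u) =
     (\<Sum>u\<in>?V. c u) - (\<Sum>u\<in>?V. int (card {w \<in> ?V. c w < c u})) + (\<Sum>u\<in>?V. int (card {w \<in> ?V. c u < c w}))"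
    by (simp add: step_Kn sum.distrib sum_subtractf)
  moreover have "(\<Sum>u\<in>?V. int (card {w \<in> ?V. c w < c u})) = (\<Sum>u\<in>?V. int (card {w \<in> ?V. c u < c w}))"
  proof -
    have "(\<Sum>u\<in>?V. int (card {w \<in> ?V. c w < c u})) = (\<Sum>u\<in>?V. \<Sum>w\<in>?V. if c w < c u then 1 else 0)"
      by (rule sum.cong[OF refl], rule card_as_sum) simp
    also have "\<dots> = (\<Sum>w\<in>?V. \<Sum>u\<in>?V. if c w < c u then 1 else 0)" by (rule sum.swap)
    also have "\<dots> = (\<Sum>u\<in>?V. int (card {w \<in> ?V. c u < c w}))"
      by (rule sum.cong[OF refl], rule card_as_sum[symmetric]) simp
    finally show ?thesis .
  qed
  ultimately show ?thesis by simp
qed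

lemma step_diff:
  assumes u: "u \<in> {0..<n}" and v: "v \<in> {0..<n}" and lt: "c u < c v"
  shows "diffusion_step {0..<n} Kn_edge c v - diffusion_step {0..<n} Kn_edge c u \<le> c v - c u - 2"
    and "diffusion_step {0..<n} Kn_edge c v - diffusion_step {0..<n} Kn_edge c u \<ge> c v - c u - 2 * int n + 2"
proof -
  let ?V = "{0..<n::nat}"
  let ?Lu = "{w \<in> ?V. c w < c u}" and ?Lv = "{w \<in> ?V. c w < c v}"
  let ?Gu = "{w \<in> ?V. c u < c w}" and ?Gv = "{w \<in> ?V. c v < c w}"
  have "?Lu \<subset> ?Lv" using u lt by auto
  hence a: "card ?Lu < card ?Lv" by (intro psubset_card_mono) auto
  have "?Gv \<subset> ?Gu" using v lt by auto
  hence b: "card ?Gv < card ?Gu" by (intro psubset_card_mono) auto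
  have "?Lv \<subseteq> ?V - {v}" by auto
  hence "card ?Lv \<le> card (?V - {v})" by (intro card_mono) auto
  hence c: "card ?Lv \<le> n - 1" using v by simp
  have "?Gu \<subseteq> ?V - {u}" by auto
  hence "card ?Gu \<le> card (?V - {u})" by (intro card_mono) auto
  hence d: "card ?Gu \<le> n - 1" using u by simp
  have n1: "n \<ge> 1" using u by simp
  show "diffusion_step ?V Kn_edge c v - diffusion_step ?V Kn_edge c u \<le> c v - c u - 2"
    using a b unfolding step_Kn[OF u] step_Kn[OF v] by linarith
  show "diffusion_step ?V Kn_edge c v - diffusion_step ?V Kn_edge c u \<ge> c v - c u - 2 * int n + 2"
    using a b c d n1 unfolding step_Kn[OF u] step_Kn[OF v] by linarith
qed

lemma step_spread:
  assumes D: "D \<ge> 2 * int n"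
    and sp: "\<forall>u\<in>{0..<n}. \<forall>v\<in>{0..<n}. \<bar>c u - c v\<bar> \<le> D"
  shows "\<forall>u\<in>{0..<n}. \<forall>v\<in>{0..<n}. \<bar>diffusion_step {0..<n} Kn_edge c u - diffusion_step {0..<n} Kn_edge c v\<bar> \<le> D"
proof (intro ballI)
  fix u v assume u: "u \<in> {0..<n::nat}" and v: "v \<in> {0..<n}"
  have sp1: "\<bar>c u - c v\<bar> \<le> D" using sp u v by blast
  consider "c u < c v" | "c u = c v" | "c v < c u" by linarith
  then show "\<bar>diffusion_step {0..<n} Kn_edge c u - diffusion_step {0..<n} Kn_edge c v\<bar> \<le> D"
  proof cases
    case 1 then show ?thesis using step_diff[OF u v 1] sp1 D by linarith
  next
    case 2 then show ?thesis using D unfolding step_Kn[OF u] step_Kn[OF v] 2 by simp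
  next
    case 3 then show ?thesis using step_diff[OF v u 3] sp1 D by linarith
  qed
qed

lemma diff_Suc: "diffusion V E c0 (Suc t) = diffusion_step V E (diffusion V E c0 t)"
  by (simp add: diffusion_def)

lemma value_bound:
  assumes sp: "\<forall>u\<in>{0..<n}. \<forall>v\<in>{0..<n}. \<bar>c u - c v\<bar> \<le> D"
    and u: "u \<in> {0..<n::nat}"
  shows "\<bar>c u\<bar> \<le> \<bar>\<Sum>w\<in>{0..<n}. c w\<bar> + int n * D"
proof -
  have n1: "n \<ge> 1" using u by simp
  have "int n * c u - (\<Sum>w\<in>{0..<n}. c w) = (\<Sum>w\<in>{0..<n}. c u - c w)"
    by (simp add: sum_subtractf)
  also have "\<bar>\<dots>\<bar> \<le> (\<Sum>w\<in>{0..<n}. \<bar>c u - c w\<bar>)" by (rule sum_abs)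
  also have "\<dots> \<le> (\<Sum>w\<in>{0..<n}. D)" by (rule sum_mono) (use sp u in auto)
  also have "\<dots> = int n * D" by simp
  finally have h: "\<bar>int n * c u - (\<Sum>w\<in>{0..<n}. c w)\<bar> \<le> int n * D" .
  have "1 * \<bar>c u\<bar> \<le> int n * \<bar>c u\<bar>" by (rule mult_right_mono) (use n1 in simp_all)
  hence "\<bar>c u\<bar> \<le> \<bar>int n * c u\<bar>" by (simp add: abs_mult)
  thus ?thesis using h by linarith
qed

theorem theorem12:
  fixes n :: nat and c0 :: "nat \<Rightarrow> int"
  assumes "n \<ge> 2"
  shows "\<exists>t p. p \<ge> 1 \<and>
    (\<forall>v \<in> Kn_vertices n. diffusion (Kn_vertices n) Kn_edge c0 (t + p) v
                          = diffusion (Kn_vertices n) Kn_edge c0 t v)"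
proof -
  let ?V = "{0..<n::nat}"
  let ?c = "diffusion ?V Kn_edge c0"
  define D where "D = 2 * int n + 2 * (\<Sum>w\<in>?V. \<bar>c0 w\<bar>)"
  define S where "S = (\<Sum>w\<in>?V. c0 w)"
  define B where "B = \<bar>S\<bar> + int n * D"
  have D2: "D \<ge> 2 * int n" unfolding D_def by (simp add: sum_nonneg)
  have sp0: "\<forall>u\<in>?V. \<forall>v\<in>?V. \<bar>c0 u - c0 v\<bar> \<le> D"
  proof (intro ballI)
    fix u v assume u: "u \<in> ?V" and v: "v \<in> ?V"
    have "\<bar>c0 u\<bar> \<le> (\<Sum>w\<in>?V. \<bar>c0 w\<bar>)" by (rule member_le_sum) (use u in auto)
    moreover have "\<bar>c0 v\<bar> \<le> (\<Sum>w\<in>?V. \<bar>c0 w\<bar>)" by (rule member_le_sum) (use v in auto)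
    ultimately show "\<bar>c0 u - c0 v\<bar> \<le> D" unfolding D_def by linarith
  qed
  have inv: "(\<forall>u\<in>?V. \<forall>v\<in>?V. \<bar>?c t u - ?c t v\<bar> \<le> D) \<and> (\<Sum>w\<in>?V. ?c t w) = S" for t
  proof (induction t)
    case 0 then show ?case using sp0 by (simp add: diffusion_def S_def)
  next
    case (Suc t) then show ?case
      using step_spread[OF D2, of "?c t"] step_sum[of n "?c t"] by (simp add: diff_Suc)
  qed
  define f where "f t = restrict (?c t) ?V" for t
  have fin: "finite (PiE ?V (\<lambda>_. {-B..B}))" by (rule finite_PiE) auto
  have sub: "range f \<subseteq> PiE ?V (\<lambda>_. {-B..B})"
  proof
    fix x assume "x \<in> range f"
    then obtain t where x: "x = f t" by auto
    have bnd: "\<forall>u\<in>?V. \<bar>?c t u\<bar> \<le> B"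
      using value_bound[of n "?c t" D] inv[of t] unfolding B_def by simp
    show "x \<in> PiE ?V (\<lambda>_. {-B..B})" unfolding x f_def
      by (rule restrict_PiE_iff[THEN iffD2]) (use bnd in \<open>auto simp: abs_le_iff\<close>)
  qed
  have "\<not> inj f"
  proof
    assume "inj f"
    hence "infinite (range f)" by (simp add: finite_image_iff)
    thus False using fin sub finite_subset by blast
  qed
  then obtain i j where ij: "f i = f j" "i \<noteq> j" unfolding inj_def by blast
  obtain a b where ab: "f a = f b" "a < b"
    using ij by (metis linorder_neqE_nat)
  have "\<forall>v\<in>?V. ?c (a + (b - a)) v = ?c a v"
  proof
    fix v assume v: "v \<in> ?V"
    have "restrict (?c b) ?V v = restrict (?c a) ?V v" using ab(1) unfolding f_def by simp
    thus "?c (a + (b - a)) v = ?c a v" using v ab(2) by simp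
  qed
  thus ?thesis using ab(2) unfolding Kn_vertices_def
    by (intro exI[of _ a] exI[of _ "b - a"]) auto
qed

end
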